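(* Let $X$ be a smooth projective variety defined over $\overline{\mathbb{Q}}$ and $f\colon X\to X$ a surjective endomorphism over $\overline{\mathbb{Q}}$. Let $\lambda\in\mathbb{C}$ with $|\lambda|\neq 0,1$. Let $D_0,\dots,D_l\in \mathrm{Div}(X)\otimes_{\mathbb Z}\mathbb{C}$ be $\mathbb{C}$-divisors satisfying the linear equivalences $f^\ast D_j\sim D_{j-1}+\lambda D_j$ for $0\le j\le l$, where $D_{-1}:=0$, and for each $j$ fix a Weil height function $h_{D_j}\colon X(\overline{\mathbb Q})\to\mathbb{C}$. Then there exist unique functions $\widehat{h}_{D_j}\colon \varprojlim_f X(\overline{\mathbb{Q}})\to\mathbb{C}$ ($0\le j\le l$) such that $\widehat{h}_{D_j}-h_{D_j}\circ \mathrm{pr}_0$ is a bounded function on $\varprojlim_f X(\overline{\mathbb{Q}})$ for each $j$, and \[\widehat{h}_{D_j}\circ f=\widehat{h}_{D_{j-1}}+\lambda\,\widehat{h}_{D_j}\quad(0\le j\le l),\] where $\widehat{h}_{D_{-1}}:=0$.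
   Context: $\varprojlim_f X(\overline{\mathbb{Q}})$ denotes the set of sequences $(P_n)_{n\in\mathbb Z}\in X(\overline{\mathbb Q})^{\mathbb Z}$ with $f(P_n)=P_{n+1}$ for all $n\in\mathbb{Z}$; $\mathrm{pr}_m((P_n)_n)=P_m$; and $f$ acts on this set as the left shift, i.e. $f((P_n)_n)$ is the sequence whose $m$-th term is $P_{m+1}$. For a $\mathbb{C}$-divisor $D=\sum_i a_iE_i$ ($a_i\in\mathbb C$, $E_i$ divisors), a Weil height function is $h_D=\sum_i a_i h_{E_i}$ with $h_{E_i}$ Weil height functions (in the usual sense of the Weil height machine) associated with $E_i$. *)

theory Defs
  imports Complex_Main
begin

text \<open>Points of X(Qbar): a type 'x.  Prime divisors: a type 'e.
  Integer divisors: finitely supported 'e => int; C-divisors: finitely supported 'e => complex.\<close>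

definition fin_supp :: "('e \<Rightarrow> 'a::zero) \<Rightarrow> bool" where
  "fin_supp D \<longleftrightarrow> finite {e. D e \<noteq> 0}"

definition bounded_on :: "'a set \<Rightarrow> ('a \<Rightarrow> complex) \<Rightarrow> bool" where
  "bounded_on A g \<longleftrightarrow> (\<exists>B. \<forall>x\<in>A. cmod (g x) \<le> B)"

definition div_height :: "('e \<Rightarrow> 'x \<Rightarrow> real) \<Rightarrow> ('e \<Rightarrow> complex) \<Rightarrow> 'x \<Rightarrow> complex" where
  "div_height hE D x = (\<Sum>e\<in>{e. D e \<noteq> 0}. D e * complex_of_real (hE e x))"

text \<open>Pullback of a C-divisor, given pullbacks f^*E of prime divisors.\<close>
definition pullbackC :: "('e \<Rightarrow> 'e \<Rightarrow> int) \<Rightarrow> ('e \<Rightarrow> complex) \<Rightarrow> ('e \<Rightarrow> complex)" where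
  "pullbackC fstar D = (\<lambda>e'. \<Sum>e\<in>{e. D e \<noteq> 0}. D e * of_int (fstar e e'))"

text \<open>Linear equivalence of C-divisors: the difference lies in (principal divisors) (x) C.\<close>
definition lin_equiv_C :: "('e \<Rightarrow> int) set \<Rightarrow> ('e \<Rightarrow> complex) \<Rightarrow> ('e \<Rightarrow> complex) \<Rightarrow> bool" where
  "lin_equiv_C Prin D D' \<longleftrightarrow>
     (\<exists>K c P. finite (K::nat set) \<and> (\<forall>k\<in>K. P k \<in> Prin) \<and>
        (\<forall>e. D e - D' e = (\<Sum>k\<in>K. c k * of_int (P k e))))"

text \<open>Properties of the Weil height machine (for f, the pullback data fstar, the set of principal
  divisors Prin, and chosen Weil heights hE of the prime divisors).\<close>
definition weil_height_machine ::
  "('x \<Rightarrow> 'x) \<Rightarrow> ('e \<Rightarrow> 'e \<Rightarrow> int) \<Rightarrow> ('e \<Rightarrow> int) set \<Rightarrow> ('e \<Rightarrow> 'x \<Rightarrow> real) \<Rightarrow> bool" where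
  "weil_height_machine f fstar Prin hE \<longleftrightarrow>
     (\<forall>e. fin_supp (fstar e)) \<and>
     (\<forall>P\<in>Prin. fin_supp P \<and> bounded_on UNIV (div_height hE (of_int \<circ> P))) \<and>
     (\<forall>e. bounded_on UNIV (\<lambda>x. div_height hE (of_int \<circ> fstar e) x - complex_of_real (hE e (f x))))"

definition inv_lim :: "('x \<Rightarrow> 'x) \<Rightarrow> (int \<Rightarrow> 'x) set" where
  "inv_lim f = {P. \<forall>n. f (P n) = P (n + 1)}"

definition pr :: "int \<Rightarrow> (int \<Rightarrow> 'x) \<Rightarrow> 'x" where
  "pr m P = P m"

definition shift :: "(int \<Rightarrow> 'x) \<Rightarrow> (int \<Rightarrow> 'x)" where
  "shift P = (\<lambda>m. P (m + 1))"

end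

theory Submission
  imports Defs
begin

lemma iter_in: "(\<forall>P\<in>S. \<sigma> P \<in> S) \<Longrightarrow> P \<in> S \<Longrightarrow> (\<sigma> ^^ n) P \<in> S"
  by (induction n) auto

lemma solve_gt:
  fixes lam :: complex and r :: "'a \<Rightarrow> complex"
  assumes lam: "1 < cmod lam" and sS: "\<forall>P\<in>S. \<sigma> P \<in> S" and rB: "\<forall>P\<in>S. cmod (r P) \<le> B"
  shows "\<exists>u. bounded_on S u \<and> (\<forall>P\<in>S. u (\<sigma> P) = lam * u P + r P)"
proof -
  define q where "q = 1 / cmod lam"
  have q0: "0 < q" "q < 1" using lam by (auto simp: q_def divide_simps)
  have lam0: "lam \<noteq> 0" using lam by auto
  define a where "a P n = r ((\<sigma>^^n) P) / lam^(Suc n)" for P n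
  have na: "norm (a P n) \<le> B * q^(Suc n)" if "P \<in> S" for P n
  proof -
    have "cmod (r ((\<sigma>^^n) P)) \<le> B" using rB iter_in[OF sS that] by blast
    hence "cmod (r ((\<sigma>^^n) P)) / cmod lam ^ Suc n \<le> B / cmod lam ^ Suc n"
      by (intro divide_right_mono) auto
    thus ?thesis by (simp add: a_def norm_divide norm_power norm_mult q_def power_one_over)
  qed
  have "summable (\<lambda>n. B * (q^n * q))"
    using q0 by (intro summable_mult summable_mult2 summable_geometric) auto
  hence sg: "summable (\<lambda>n. B * q^(Suc n))" by (simp add: mult.commute)
  have sa: "summable (a P)" if "P \<in> S" for P
    using summable_comparison_test'[OF sg na[OF that]] .
  define u where "u P = - suminf (a P)" for P
  have "bounded_on S u"
    unfolding bounded_on_def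
  proof (intro exI ballI)
    fix P assume "P \<in> S"
    have "norm (suminf (a P)) \<le> (\<Sum>n. B * q^(Suc n))"
      by (rule norm_suminf_le[OF na[OF \<open>P\<in>S\<close>] sg])
    thus "cmod (u P) \<le> (\<Sum>n. B * q^(Suc n))" by (simp add: u_def)
  qed
  moreover have "u (\<sigma> P) = lam * u P + r P" if "P \<in> S" for P
  proof -
    have e: "a (\<sigma> P) n = lam * a P (Suc n)" for n
      using lam0 by (simp add: a_def funpow_Suc_right del: funpow.simps)
    have "suminf (a (\<sigma> P)) = lam * (\<Sum>n. a P (Suc n))"
      unfolding e by (rule suminf_mult) (use sa[OF that] summable_Suc_iff in auto)
    also have "\<dots> = lam * (suminf (a P) - r P / lam)"
      using suminf_split_head[OF sa[OF that]] by (simp add: a_def)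
    finally show ?thesis using lam0 by (simp add: u_def algebra_simps)
  qed
  ultimately show ?thesis by blast
qed

lemma solve_lt:
  fixes lam :: complex and r :: "'a \<Rightarrow> complex"
  assumes lam: "cmod lam < 1" and tS: "\<forall>P\<in>S. \<tau> P \<in> S" and st: "\<forall>P\<in>S. \<tau> (\<sigma> P) = P"
    and sS: "\<forall>P\<in>S. \<sigma> P \<in> S"
    and rB: "\<forall>P\<in>S. cmod (r P) \<le> B"
  shows "\<exists>u. bounded_on S u \<and> (\<forall>P\<in>S. u (\<sigma> P) = lam * u P + r P)"
proof -
  have nb: "norm (lam^n * r ((\<tau>^^m) P)) \<le> B * cmod lam^n" if "P \<in> S" for P n m
  proof -
    have "cmod (r ((\<tau>^^m) P)) \<le> B" using rB iter_in[OF tS that] by blast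
    hence "cmod lam ^ n * cmod (r ((\<tau>^^m) P)) \<le> cmod lam ^ n * B"
      by (intro mult_left_mono) auto
    thus ?thesis by (simp add: norm_mult norm_power mult.commute)
  qed
  have sg: "summable (\<lambda>n. B * cmod lam^n)"
    using lam by (intro summable_mult summable_geometric) auto
  have sb: "summable (\<lambda>n. lam^n * r ((\<tau>^^(g n)) P))" if "P \<in> S" for P g
    using summable_comparison_test'[OF sg nb[OF that]] .
  define u where "u P = (\<Sum>n. lam^n * r ((\<tau>^^(Suc n)) P))" for P
  have "bounded_on S u"
    unfolding bounded_on_def
  proof (intro exI ballI)
    fix P assume "P \<in> S"
    show "cmod (u P) \<le> (\<Sum>n. B * cmod lam^n)" unfolding u_def
      by (rule norm_suminf_le[OF nb[OF \<open>P\<in>S\<close>] sg])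
  qed
  moreover have "u (\<sigma> P) = lam * u P + r P" if "P \<in> S" for P
  proof -
    have e: "(\<tau>^^(Suc n)) (\<sigma> P) = (\<tau>^^n) P" for n
      using st that by (simp add: funpow_Suc_right del: funpow.simps)
    have "u (\<sigma> P) = (\<Sum>n. lam^n * r ((\<tau>^^n) P))" unfolding u_def e ..
    also have "\<dots> = r P + (\<Sum>n. lam^(Suc n) * r ((\<tau>^^(Suc n)) P))"
      using suminf_split_head[OF sb[OF that, of id]] by simp
    also have "(\<Sum>n. lam^(Suc n) * r ((\<tau>^^(Suc n)) P)) = (\<Sum>n. lam * (lam^n * r ((\<tau>^^(Suc n)) P)))"
      by (simp add: mult.assoc del: funpow.simps)
    also have "\<dots> = lam * u P" unfolding u_def
      by (rule suminf_mult[OF sb[OF that, of Suc]])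
    finally show ?thesis by simp
  qed
  ultimately show ?thesis by blast
qed

lemma uniq:
  fixes lam :: complex and v :: "'a \<Rightarrow> complex"
  assumes l0: "cmod lam \<noteq> 0" and l1: "cmod lam \<noteq> 1"
    and sS: "\<forall>P\<in>S. \<sigma> P \<in> S" and tS: "\<forall>P\<in>S. \<tau> P \<in> S"
    and ts: "\<forall>P\<in>S. \<sigma> (\<tau> P) = P"
    and vb: "bounded_on S v" and ve: "\<forall>P\<in>S. v (\<sigma> P) = lam * v P" and P: "P \<in> S"
  shows "v P = 0"
proof (rule ccontr)
  assume nz: "v P \<noteq> 0"
  obtain B where B: "\<forall>Q\<in>S. cmod (v Q) \<le> B" using vb unfolding bounded_on_def by blast
  have vP: "cmod (v P) > 0" using nz by simp
  show False
  proof (cases "cmod lam > 1")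
    case True
    have it: "v ((\<sigma>^^n) P) = lam^n * v P" for n
      by (induction n) (use ve iter_in[OF sS P] in auto)
    obtain n where n: "B / cmod (v P) < cmod lam ^ n" using real_arch_pow[OF True] by blast
    have "cmod lam ^ n * cmod (v P) \<le> B" using B iter_in[OF sS P, of n] it[of n]
      by (metis norm_mult norm_power)
    thus False using n vP by (simp add: divide_simps)
  next
    case False
    hence lt: "cmod lam < 1" using l1 by simp
    have it: "v P = lam^n * v ((\<tau>^^n) P)" for n
    proof (induction n)
      case (Suc n)
      have "v ((\<tau>^^n) P) = v (\<sigma> ((\<tau>^^(Suc n)) P))"
        using ts iter_in[OF tS P, of n] by simp
      also have "\<dots> = lam * v ((\<tau>^^(Suc n)) P)"
        using ve iter_in[OF tS P, of "Suc n"] by blast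
      finally show ?case using Suc by (simp add: mult.assoc)
    qed simp
    have B0: "B > 0" using B P vP by (meson less_le_trans)
    obtain n where n: "cmod lam ^ n < cmod (v P) / B"
      using real_arch_pow_inv[OF _ lt, of "cmod (v P) / B"] B0 vP by auto
    have "cmod (v P) \<le> cmod lam ^ n * B" using B iter_in[OF tS P, of n] it[of n]
      by (metis norm_ge_zero norm_mult norm_power mult_left_mono zero_le_power)
    thus False using n B0 by (simp add: divide_simps)
  qed
qed

lemma bnd_add: "bounded_on A g \<Longrightarrow> bounded_on A k \<Longrightarrow> bounded_on A (\<lambda>x. g x + k x)"
  unfolding bounded_on_def by (meson add_mono norm_triangle_ineq order_trans)
lemma bnd_uminus: "bounded_on A g \<Longrightarrow> bounded_on A (\<lambda>x. - g x)"
  unfolding bounded_on_def by simp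
lemma bnd_diff: "bounded_on A g \<Longrightarrow> bounded_on A k \<Longrightarrow> bounded_on A (\<lambda>x. g x - k x)"
  using bnd_add[of A g "\<lambda>x. - k x"] bnd_uminus[of A k] by simp
lemma bnd_cmult: "bounded_on A g \<Longrightarrow> bounded_on A (\<lambda>x. c * g x)"
  unfolding bounded_on_def by (metis mult_left_mono norm_ge_zero norm_mult)
lemma bnd_sum: "finite K \<Longrightarrow> (\<And>k. k \<in> K \<Longrightarrow> bounded_on A (g k)) \<Longrightarrow> bounded_on A (\<lambda>x. \<Sum>k\<in>K. g k x)"
proof (induction K rule: finite_induct)
  case empty thus ?case by (auto simp add: bounded_on_def)
next
  case (insert a F) thus ?case by (simp add: bnd_add)
qed
lemma bnd_comp: "bounded_on UNIV g \<Longrightarrow> bounded_on A (\<lambda>x. g (\<phi> x))"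
  unfolding bounded_on_def by blast
lemma bnd_cong: "bounded_on A g \<Longrightarrow> (\<And>x. x \<in> A \<Longrightarrow> g x = k x) \<Longrightarrow> bounded_on A k"
  unfolding bounded_on_def by auto

lemma dh_sup: "finite A \<Longrightarrow> {e. X e \<noteq> 0} \<subseteq> A \<Longrightarrow> div_height hE X x = (\<Sum>e\<in>A. X e * complex_of_real (hE e x))"
  unfolding div_height_def by (rule sum.mono_neutral_left) auto

lemma g_bound:
  fixes D D' :: "'e \<Rightarrow> complex" and h h' :: "'x \<Rightarrow> complex"
  assumes W: "weil_height_machine f fstar Prin hE" and fs: "fin_supp D" and fs': "fin_supp D'"
    and le: "lin_equiv_C Prin (pullbackC fstar D) (\<lambda>e. D' e + lam * D e)"
    and hb: "bounded_on UNIV (\<lambda>x. h x - div_height hE D x)"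
    and hb': "bounded_on UNIV (\<lambda>x. h' x - div_height hE D' x)"
  shows "bounded_on UNIV (\<lambda>x. h (f x) - h' x - lam * h x)"
proof -
  let ?dh = "div_height hE"
  define pb where "pb = pullbackC fstar D"
  define E where "E = {e. D e \<noteq> 0}"
  have fE: "finite E" using fs by (simp add: E_def fin_supp_def)
  have fst: "finite {e'. fstar e e' \<noteq> 0}" for e using W by (simp add: weil_height_machine_def fin_supp_def)
  define U where "U = (\<Union>e\<in>E. {e'. fstar e e' \<noteq> 0})"
  have fU: "finite U" using fE fst by (simp add: U_def)
  have supp_pb: "{e'. pb e' \<noteq> 0} \<subseteq> U"
  proof
    fix e' assume "e' \<in> {e'. pb e' \<noteq> 0}"
    hence "(\<Sum>e\<in>E. D e * of_int (fstar e e')) \<noteq> 0" by (simp add: pb_def pullbackC_def E_def)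
    then obtain e where "e \<in> E" "D e * of_int (fstar e e') \<noteq> 0" by (meson sum.neutral)
    thus "e' \<in> U" by (auto simp: U_def)
  qed
  have dfst: "?dh (of_int \<circ> fstar e) x = (\<Sum>e'\<in>U. of_int (fstar e e') * complex_of_real (hE e' x))"
    if "e \<in> E" for e x
  proof -
    have "{e'. (of_int \<circ> fstar e) e' \<noteq> (0::complex)} \<subseteq> U" using that by (auto simp: U_def)
    from dh_sup[OF fU this] show ?thesis by (simp add: comp_def)
  qed
  have step1: "?dh D (f x) - ?dh pb x = (\<Sum>e\<in>E. D e * (complex_of_real (hE e (f x)) - ?dh (of_int \<circ> fstar e) x))" for x
  proof -
    have "?dh pb x = (\<Sum>e'\<in>U. pb e' * complex_of_real (hE e' x))" by (rule dh_sup[OF fU supp_pb])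
    also have "\<dots> = (\<Sum>e'\<in>U. \<Sum>e\<in>E. D e * (of_int (fstar e e') * complex_of_real (hE e' x)))"
      by (simp add: pb_def pullbackC_def E_def sum_distrib_right mult.assoc)
    also have "\<dots> = (\<Sum>e\<in>E. D e * ?dh (of_int \<circ> fstar e) x)"
      by (subst sum.swap) (simp add: dfst sum_distrib_left)
    finally show ?thesis
      by (simp add: div_height_def E_def right_diff_distrib sum_subtractf)
  qed
  have b1: "bounded_on UNIV (\<lambda>x. ?dh D (f x) - ?dh pb x)"
    unfolding step1
    by (intro bnd_sum[OF fE] bnd_cmult)
       (use W in \<open>auto simp: weil_height_machine_def intro: bnd_cong[OF bnd_uminus]\<close>)
  obtain K c P where K: "finite (K::nat set)" "\<forall>k\<in>K. P k \<in> Prin"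
    "\<forall>e. pb e - (D' e + lam * D e) = (\<Sum>k\<in>K. c k * of_int (P k e))"
    using le unfolding lin_equiv_C_def pb_def by blast
  have PW: "fin_supp (P k)" "bounded_on UNIV (?dh (of_int \<circ> P k))" if "k \<in> K" for k
    using W K(2) that by (auto simp: weil_height_machine_def)
  define A where "A = U \<union> {e. D e \<noteq> 0} \<union> {e. D' e \<noteq> 0} \<union> (\<Union>k\<in>K. {e. P k e \<noteq> 0})"
  have fA: "finite A" using fU fs fs' K(1) PW(1) by (auto simp: A_def fin_supp_def)
  have dA: "?dh X x = (\<Sum>e\<in>A. X e * complex_of_real (hE e x))" if "{e. X e \<noteq> 0} \<subseteq> A" for X x
    by (rule dh_sup[OF fA that])
  have "{e. pb e \<noteq> 0} \<subseteq> A" using supp_pb by (auto simp: A_def)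
  note dpb = dA[OF this]
  have dD: "?dh D x = (\<Sum>e\<in>A. D e * complex_of_real (hE e x))" for x by (rule dA) (auto simp: A_def)
  have dD': "?dh D' x = (\<Sum>e\<in>A. D' e * complex_of_real (hE e x))" for x by (rule dA) (auto simp: A_def)
  have dP: "?dh (of_int \<circ> P k) x = (\<Sum>e\<in>A. of_int (P k e) * complex_of_real (hE e x))" if "k \<in> K" for k x
  proof -
    have "{e. (of_int \<circ> P k) e \<noteq> (0::complex)} \<subseteq> A" using that by (auto simp: A_def)
    from dA[OF this] show ?thesis by (simp add: comp_def)
  qed
  have step2: "?dh pb x - ?dh D' x - lam * ?dh D x = (\<Sum>k\<in>K. c k * ?dh (of_int \<circ> P k) x)" for x
  proof -
    have "?dh pb x - ?dh D' x - lam * ?dh D x = (\<Sum>e\<in>A. (pb e - (D' e + lam * D e)) * complex_of_real (hE e x))"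
      by (simp add: dpb dD dD' sum_distrib_left algebra_simps sum_subtractf[symmetric] sum.distrib)
    also have "\<dots> = (\<Sum>e\<in>A. \<Sum>k\<in>K. c k * (of_int (P k e) * complex_of_real (hE e x)))"
      using K(3) by (simp add: sum_distrib_right mult.assoc)
    also have "\<dots> = (\<Sum>k\<in>K. c k * ?dh (of_int \<circ> P k) x)"
      by (subst sum.swap) (simp add: dP sum_distrib_left)
    finally show ?thesis .
  qed
  have b2: "bounded_on UNIV (\<lambda>x. ?dh pb x - ?dh D' x - lam * ?dh D x)"
    unfolding step2 by (intro bnd_sum[OF K(1)] bnd_cmult PW(2))
  have b0: "bounded_on UNIV (\<lambda>x. h (f x) - ?dh D (f x))" by (rule bnd_comp[OF hb])
  have "bounded_on UNIV (\<lambda>x. (h (f x) - ?dh D (f x)) + (?dh D (f x) - ?dh pb x)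
        + (?dh pb x - ?dh D' x - lam * ?dh D x) - (h' x - ?dh D' x) - lam * (h x - ?dh D x))"
    by (intro bnd_diff bnd_add bnd_cmult b0 b1 b2 hb hb')
  thus ?thesis by (rule bnd_cong) (simp add: algebra_simps)
qed

theorem theorem1p2:
  fixes f :: "'x \<Rightarrow> 'x"
    and fstar :: "'e \<Rightarrow> 'e \<Rightarrow> int"
    and Prin :: "('e \<Rightarrow> int) set"
    and hE :: "'e \<Rightarrow> 'x \<Rightarrow> real"
    and lam :: complex
    and l :: nat
    and D :: "nat \<Rightarrow> 'e \<Rightarrow> complex"
    and h :: "nat \<Rightarrow> 'x \<Rightarrow> complex"
  assumes "surj f"
    and "weil_height_machine f fstar Prin hE"
    and "cmod lam \<noteq> 0" and "cmod lam \<noteq> 1"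
    and "\<forall>j\<le>l. fin_supp (D j)"
    and "\<forall>j\<le>l. lin_equiv_C Prin (pullbackC fstar (D j))
                 (\<lambda>e. (if j = 0 then 0 else D (j - 1) e) + lam * D j e)"
    and "\<forall>j\<le>l. bounded_on UNIV (\<lambda>x. h j x - div_height hE (D j) x)"
  shows "\<exists>hh :: nat \<Rightarrow> (int \<Rightarrow> 'x) \<Rightarrow> complex.
           ((\<forall>j\<le>l. bounded_on (inv_lim f) (\<lambda>P. hh j P - h j (pr 0 P))) \<and>
            (\<forall>j\<le>l. \<forall>P\<in>inv_lim f. hh j (shift P) = (if j = 0 then 0 else hh (j - 1) P) + lam * hh j P)) \<and>
           (\<forall>hh' :: nat \<Rightarrow> (int \<Rightarrow> 'x) \<Rightarrow> complex.
              ((\<forall>j\<le>l. bounded_on (inv_lim f) (\<lambda>P. hh' j P - h j (pr 0 P))) \<and>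
               (\<forall>j\<le>l. \<forall>P\<in>inv_lim f. hh' j (shift P) = (if j = 0 then 0 else hh' (j - 1) P) + lam * hh' j P))
              \<longrightarrow> (\<forall>j\<le>l. \<forall>P\<in>inv_lim f. hh' j P = hh j P))"
proof -
  let ?S = "inv_lim f"
  define \<tau> :: "(int \<Rightarrow> 'x) \<Rightarrow> (int \<Rightarrow> 'x)" where "\<tau> P = (\<lambda>m. P (m - 1))" for P
  have sS: "\<forall>P\<in>?S. shift P \<in> ?S" by (simp add: inv_lim_def shift_def add.assoc)
  have tS: "\<forall>P\<in>?S. \<tau> P \<in> ?S" by (simp add: inv_lim_def \<tau>_def)
  have st: "\<forall>P\<in>?S. \<tau> (shift P) = P" by (simp add: \<tau>_def shift_def)
  have ts: "\<forall>P\<in>?S. shift (\<tau> P) = P" by (simp add: \<tau>_def shift_def)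
  have P1: "P 1 = f (P 0)" if "P \<in> ?S" for P using that by (simp add: inv_lim_def)
  have solve: "\<exists>u. bounded_on ?S u \<and> (\<forall>P\<in>?S. u (shift P) = lam * u P + r P)"
    if rb: "bounded_on ?S r" for r
  proof -
    obtain B where B: "\<forall>P\<in>?S. cmod (r P) \<le> B" using rb unfolding bounded_on_def by blast
    show ?thesis
    proof (cases "cmod lam > 1")
      case True thus ?thesis using solve_gt[OF True sS B] by blast
    next
      case False
      hence "cmod lam < 1" using assms(4) by simp
      thus ?thesis using solve_lt[OF _ tS st sS B] by blast
    qed
  qed
  define g where "g j x = h j (f x) - (if j = 0 then 0 else h (j - 1) x) - lam * h j x" for j x
  have gb: "bounded_on UNIV (g j)" if "j \<le> l" for j
  proof (cases j)
    case 0
    have "bounded_on UNIV (\<lambda>x. h 0 (f x) - (\<lambda>x. 0) x - lam * h 0 x)"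
    proof (rule g_bound[OF assms(2)])
      show "fin_supp (D 0)" using assms(5) by simp
      show "fin_supp (\<lambda>e. 0::complex)" by (simp add: fin_supp_def)
      show "lin_equiv_C Prin (pullbackC fstar (D 0)) (\<lambda>e. 0 + lam * D 0 e)"
        using spec[OF assms(6), of 0] by simp
      show "bounded_on UNIV (\<lambda>x. h 0 x - div_height hE (D 0) x)" using assms(7) by simp
      show "bounded_on UNIV (\<lambda>x. 0 - div_height hE (\<lambda>e. 0) x)"
        by (auto simp add: bounded_on_def div_height_def)
    qed
    thus ?thesis using 0 by (rule_tac bnd_cong) (auto simp: g_def)
  next
    case (Suc i)
    have "bounded_on UNIV (\<lambda>x. h j (f x) - h i x - lam * h j x)"
    proof (rule g_bound[OF assms(2)])
      show "fin_supp (D j)" "fin_supp (D i)" using assms(5) that Suc by auto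
      show "lin_equiv_C Prin (pullbackC fstar (D j)) (\<lambda>e. D i e + lam * D j e)"
        using assms(6) that Suc by auto
      show "bounded_on UNIV (\<lambda>x. h j x - div_height hE (D j) x)"
        "bounded_on UNIV (\<lambda>x. h i x - div_height hE (D i) x)" using assms(7) that Suc by auto
    qed
    thus ?thesis using Suc by (rule_tac bnd_cong) (auto simp: g_def)
  qed
  have ex: "\<exists>U. \<forall>j\<le>m. bounded_on ?S (U j) \<and>
      (\<forall>P\<in>?S. U j (shift P) = lam * U j P + ((if j = 0 then 0 else U (j - 1) P) - g j (P 0)))"
    if "m \<le> l" for m
    using that
  proof (induction m)
    case 0
    have "bounded_on ?S (\<lambda>P. 0 - g 0 (P 0))"
      by (rule bnd_diff[OF _ bnd_comp[OF gb[of 0]]]) (auto simp: bounded_on_def)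
    then obtain u where "bounded_on ?S u" "\<forall>P\<in>?S. u (shift P) = lam * u P + (0 - g 0 (P 0))"
      using solve by blast
    thus ?case by (intro exI[of _ "\<lambda>_. u"]) auto
  next
    case (Suc m)
    then obtain U where U: "\<forall>j\<le>m. bounded_on ?S (U j) \<and>
      (\<forall>P\<in>?S. U j (shift P) = lam * U j P + ((if j = 0 then 0 else U (j - 1) P) - g j (P 0)))" by auto
    have "bounded_on ?S (\<lambda>P. U m P - g (Suc m) (P 0))"
      by (rule bnd_diff[OF _ bnd_comp[OF gb[of "Suc m"]]]) (use U Suc.prems in auto)
    then obtain u where u: "bounded_on ?S u" "\<forall>P\<in>?S. u (shift P) = lam * u P + (U m P - g (Suc m) (P 0))"
      using solve by blast
    show ?case
    proof (intro exI[of _ "U(Suc m := u)"] allI impI)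
      fix j assume "j \<le> Suc m"
      thus "bounded_on ?S ((U(Suc m := u)) j) \<and>
        (\<forall>P\<in>?S. (U(Suc m := u)) j (shift P) = lam * (U(Suc m := u)) j P +
          ((if j = 0 then 0 else (U(Suc m := u)) (j - 1) P) - g j (P 0)))"
        using U u by (cases "j = Suc m") auto
    qed
  qed
  obtain U where U: "\<forall>j\<le>l. bounded_on ?S (U j) \<and>
      (\<forall>P\<in>?S. U j (shift P) = lam * U j P + ((if j = 0 then 0 else U (j - 1) P) - g j (P 0)))"
    using ex[of l] by auto
  define hh where "hh j P = h j (pr 0 P) + U j P" for j P
  have hb: "\<forall>j\<le>l. bounded_on ?S (\<lambda>P. hh j P - h j (pr 0 P))"
    using U by (simp add: hh_def)
  have he: "\<forall>j\<le>l. \<forall>P\<in>?S. hh j (shift P) = (if j = 0 then 0 else hh (j - 1) P) + lam * hh j P"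
  proof (intro allI impI ballI)
    fix j P assume j: "j \<le> l" and P: "P \<in> ?S"
    have e: "U j (shift P) = lam * U j P + ((if j = 0 then 0 else U (j - 1) P) - g j (P 0))"
      using U j P by blast
    have "pr 0 (shift P) = f (P 0)" using P1[OF P] by (simp add: pr_def shift_def)
    thus "hh j (shift P) = (if j = 0 then 0 else hh (j - 1) P) + lam * hh j P"
      by (simp add: hh_def e g_def pr_def algebra_simps)
  qed
  show ?thesis
  proof (intro exI[of _ hh] conjI hb he allI impI)
    fix hh' :: "nat \<Rightarrow> (int \<Rightarrow> 'x) \<Rightarrow> complex"
    assume H: "(\<forall>j\<le>l. bounded_on ?S (\<lambda>P. hh' j P - h j (pr 0 P))) \<and>
      (\<forall>j\<le>l. \<forall>P\<in>?S. hh' j (shift P) = (if j = 0 then 0 else hh' (j - 1) P) + lam * hh' j P)"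
    have "j \<le> l \<longrightarrow> (\<forall>P\<in>?S. hh' j P = hh j P)" for j
    proof (induction j)
      case (Suc j) show ?case
      proof (intro impI ballI)
        fix P assume jl: "Suc j \<le> l" and P: "P \<in> ?S"
        have "bounded_on ?S (\<lambda>P. (hh' (Suc j) P - h (Suc j) (pr 0 P)) - (hh (Suc j) P - h (Suc j) (pr 0 P)))"
          by (rule bnd_diff) (use H hb jl in auto)
        hence b: "bounded_on ?S (\<lambda>P. hh' (Suc j) P - hh (Suc j) P)" by simp
        have "\<forall>Q\<in>?S. hh' (Suc j) (shift Q) - hh (Suc j) (shift Q) = lam * (hh' (Suc j) Q - hh (Suc j) Q)"
          using H he jl Suc.IH by (auto simp: algebra_simps)
        from uniq[OF assms(3,4) sS tS ts b this P] show "hh' (Suc j) P = hh (Suc j) P" by simp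
      qed
    next
      case 0 show ?case
      proof (intro impI ballI)
        fix P assume P: "P \<in> ?S"
        have "bounded_on ?S (\<lambda>P. (hh' 0 P - h 0 (pr 0 P)) - (hh 0 P - h 0 (pr 0 P)))"
          by (rule bnd_diff) (use H hb in auto)
        hence b: "bounded_on ?S (\<lambda>P. hh' 0 P - hh 0 P)" by simp
        have "\<forall>Q\<in>?S. hh' 0 (shift Q) - hh 0 (shift Q) = lam * (hh' 0 Q - hh 0 Q)"
          using H he by (auto simp: algebra_simps)
        from uniq[OF assms(3,4) sS tS ts b this P] show "hh' 0 P = hh 0 P" by simp
      qed
    qed
    then show "\<forall>P\<in>?S. hh' j P = hh j P" if "j \<le> l" for j using that by blast
  qed
qed

end
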